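(* Let $P,Q$ be probability measures, $X\sim P$, and suppose $\mathbb{P}[\imath_{P\|Q}(X)=x]=0$ for every $x\in\mathbb{R}$. Then: (a) $\omega\mapsto\mathcal{I}_\omega(P\|Q)$ is continuously differentiable on $(0,\frac12)\cup(\frac12,1)$, its derivative $\mathcal{I}'_\omega(P\|Q)$ is non-negative on $(0,\frac12)$ and non-positive on $(\frac12,1)$, and $\lim_{\omega\uparrow\frac12}\mathcal{I}'_\omega(P\|Q) - \lim_{\omega\downarrow\frac12}\mathcal{I}'_\omega(P\|Q) = 2$; (b) for $\omega\in(0,\frac12)$, $\mathbb{F}_{P\|Q}\bigl(\log\frac{1-\omega}{\omega}\bigr) = 1-\mathcal{I}_\omega(P\|Q)-(1-\omega)\mathcal{I}'_\omega(P\|Q)$; for $\omega\in(\frac12,1)$, $\mathbb{F}_{P\|Q}\bigl(\log\frac{1-\omega}{\omega}\bigr) = -\mathcal{I}_\omega(P\|Q)-(1-\omega)\mathcal{I}'_\omega(P\|Q)$; and $\mathbb{F}_{P\|Q}(0) = -\mathcal{I}_{1/2}(P\|Q)-\frac12\lim_{\omega\downarrow\frac12}\mathcal{I}'_\omega(P\|Q)$; (c) consequently, $\{\mathcal{I}_\omega(P\|Q):\omega\in(0,\frac12]\}$ determines $\mathbb{F}_{P\|Q}$ on $[0,\infty)$ and $\{\mathcal{I}_\omega(P\|Q):\omega\in(\frac12,1)\}$ determines $\mathbb{F}_{P\|Q}$ on $(-\infty,0)$.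
   Context: $\log$ is to a fixed base $b>1$. For densities $p,q$ of $P,Q$ w.r.t. a dominating measure $\mu$, $\imath_{P\|Q}:=\log p-\log q$ (in $[-\infty,\infty]$), $\mathbb{F}_{P\|Q}(x):=\mathbb{P}[\imath_{P\|Q}(X)\le x]$ with $X\sim P$. The DeGroot statistical information is $\mathcal{I}_\omega(P\|Q):=\int q\,\phi_\omega(p/q)\,\mathrm{d}\mu$ with $\phi_\omega(t)=\min\{\omega,1-\omega\}-\min\{\omega t,1-\omega\}$, $\omega\in(0,1)$, using the $f$-divergence conventions $\phi(0):=\lim_{t\downarrow0}\phi(t)$, $0\phi(0/0)=0$, $0\phi(a/0)=a\lim_{u\to\infty}\phi(u)/u$. *)

theory Defs
  imports "HOL-Probability.Probability"
begin

definition degroot_phi :: "real \<Rightarrow> real \<Rightarrow> real" where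
  "degroot_phi \<omega> t = min \<omega> (1 - \<omega>) - min (\<omega> * t) (1 - \<omega>)"

text \<open>Pointwise integrand c * phi(a/c) of an f-divergence, with the conventions
  phi(0) := lim_{t -> 0+} phi(t), 0 phi(0/0) = 0, 0 phi(a/0) = a lim_{u -> oo} phi(u)/u.\<close>
definition fdiv_integrand :: "(real \<Rightarrow> real) \<Rightarrow> real \<Rightarrow> real \<Rightarrow> real" where
  "fdiv_integrand \<phi> a c =
     (if c > 0 then (if a = 0 then c * Lim (at_right 0) \<phi> else c * \<phi> (a / c))
      else if a > 0 then a * Lim at_top (\<lambda>u. \<phi> u / u)
      else 0)"

definition f_divergence :: "(real \<Rightarrow> real) \<Rightarrow> 'a measure \<Rightarrow> ('a \<Rightarrow> real) \<Rightarrow> ('a \<Rightarrow> real) \<Rightarrow> real" where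
  "f_divergence \<phi> \<mu> p q = (\<integral>x. fdiv_integrand \<phi> (p x) (q x) \<partial>\<mu>)"

definition degroot_info :: "real \<Rightarrow> 'a measure \<Rightarrow> ('a \<Rightarrow> real) \<Rightarrow> ('a \<Rightarrow> real) \<Rightarrow> real" where
  "degroot_info \<omega> \<mu> p q = f_divergence (degroot_phi \<omega>) \<mu> p q"

definition log_ext :: "real \<Rightarrow> real \<Rightarrow> ereal" where
  "log_ext b t = (if t > 0 then ereal (log b t) else - \<infinity>)"

definition info_dens :: "real \<Rightarrow> ('a \<Rightarrow> real) \<Rightarrow> ('a \<Rightarrow> real) \<Rightarrow> 'a \<Rightarrow> ereal" where
  "info_dens b p q x = log_ext b (p x) - log_ext b (q x)"

definition info_cdf :: "real \<Rightarrow> 'a measure \<Rightarrow> ('a \<Rightarrow> real) \<Rightarrow> ('a \<Rightarrow> real) \<Rightarrow> real \<Rightarrow> real" where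
  "info_cdf b P p q x = measure P {y \<in> space P. info_dens b p q y \<le> ereal x}"

definition dens_pair :: "'a measure \<Rightarrow> 'a measure \<Rightarrow> 'a measure \<Rightarrow> ('a \<Rightarrow> real) \<Rightarrow> ('a \<Rightarrow> real) \<Rightarrow> bool" where
  "dens_pair \<mu> P Q p q \<longleftrightarrow>
     prob_space P \<and> prob_space Q \<and>
     p \<in> borel_measurable \<mu> \<and> q \<in> borel_measurable \<mu> \<and>
     (\<forall>x \<in> space \<mu>. 0 \<le> p x \<and> 0 \<le> q x) \<and>
     P = density \<mu> (\<lambda>x. ennreal (p x)) \<and> Q = density \<mu> (\<lambda>x. ennreal (q x))"

definition info_no_atoms :: "real \<Rightarrow> 'a measure \<Rightarrow> ('a \<Rightarrow> real) \<Rightarrow> ('a \<Rightarrow> real) \<Rightarrow> bool" where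
  "info_no_atoms b P p q \<longleftrightarrow> (\<forall>x::real. measure P {y \<in> space P. info_dens b p q y = ereal x} = 0)"

end

theory Submission
  imports Defs
begin

definition Gf :: "'a measure \<Rightarrow> ('a \<Rightarrow> real) \<Rightarrow> ('a \<Rightarrow> real) \<Rightarrow> real \<Rightarrow> real" where
  "Gf \<mu> p q w = (\<integral>x. min (w * p x) ((1-w) * q x) \<partial>\<mu>)"
definition Rx :: "('a \<Rightarrow> real) \<Rightarrow> ('a \<Rightarrow> real) \<Rightarrow> real \<Rightarrow> 'a \<Rightarrow> real" where
  "Rx p q w x = (if w * p x < (1-w) * q x then p x else - q x)"
definition rho :: "'a measure \<Rightarrow> ('a \<Rightarrow> real) \<Rightarrow> ('a \<Rightarrow> real) \<Rightarrow> real \<Rightarrow> real" where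
  "rho \<mu> p q w = (\<integral>x. Rx p q w x \<partial>\<mu>)"
definition Aset :: "'a measure \<Rightarrow> ('a \<Rightarrow> real) \<Rightarrow> ('a \<Rightarrow> real) \<Rightarrow> real \<Rightarrow> 'a set" where
  "Aset \<mu> p q w = {x\<in>space \<mu>. w * p x < (1-w) * q x}"
definition PA :: "'a measure \<Rightarrow> ('a \<Rightarrow> real) \<Rightarrow> ('a \<Rightarrow> real) \<Rightarrow> real \<Rightarrow> real" where
  "PA \<mu> p q w = (\<integral>x. indicator (Aset \<mu> p q w) x * p x \<partial>\<mu>)"
definition QC :: "'a measure \<Rightarrow> ('a \<Rightarrow> real) \<Rightarrow> ('a \<Rightarrow> real) \<Rightarrow> real \<Rightarrow> real" where
  "QC \<mu> p q w = (\<integral>x. indicator (space \<mu> - Aset \<mu> p q w) x * q x \<partial>\<mu>)"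


lemma phi_lim0: assumes "0 < w" "w < 1"
  shows "Lim (at_right 0) (degroot_phi w) = min w (1-w)"
proof -
  have "continuous_on UNIV (degroot_phi w)" unfolding degroot_phi_def
    by (intro continuous_intros)
  then have "(degroot_phi w \<longlongrightarrow> degroot_phi w 0) (at_right 0)"
    by (meson UNIV_I continuous_on_def filterlim_at_split tendsto_at_iff_tendsto_nhds)
  moreover have "degroot_phi w 0 = min w (1-w)" using assms by (simp add: degroot_phi_def)
  ultimately show ?thesis by (intro tendsto_Lim) auto
qed

lemma phi_limtop: assumes "0 < w" "w < 1"
  shows "Lim at_top (\<lambda>u. degroot_phi w u / u) = 0"
proof -
  have ev: "eventually (\<lambda>u. (min w (1-w) - (1-w)) / u = degroot_phi w u / u) at_top"
    using eventually_ge_at_top[of "(1-w)/w"]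
  proof eventually_elim
    case (elim u) then have "w * u \<ge> 1 - w" using assms by (simp add: field_simps)
    then show ?case by (simp add: degroot_phi_def)
  qed
  have "((\<lambda>u. (min w (1-w) - (1-w)) / u) \<longlongrightarrow> 0) at_top"
    by (intro tendsto_divide_0[OF tendsto_const] filterlim_at_top_imp_at_infinity[OF filterlim_ident])
  then have "((\<lambda>u. degroot_phi w u / u) \<longlongrightarrow> 0) at_top" using ev by (rule Lim_transform_eventually)
  then show ?thesis by (intro tendsto_Lim) auto
qed

lemma integrand_eq: assumes "0 < w" "w < 1" "0 \<le> a" "0 \<le> c"
  shows "fdiv_integrand (degroot_phi w) a c = c * min w (1-w) - min (w * a) ((1-w) * c)"
proof (cases "c > 0")
  case True
  have "c * min (w * (a / c)) (1 - w) = min (w * a) ((1-w) * c)"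
    using True by (cases "w * (a / c) \<le> 1 - w") (auto simp: min_def field_simps)
  then show ?thesis using True assms phi_lim0[OF assms(1,2)]
    by (auto simp: fdiv_integrand_def degroot_phi_def right_diff_distrib mult.commute)
next
  case False
  then have "c = 0" using assms by auto
  then show ?thesis using assms phi_limtop[OF assms(1,2)]
    by (auto simp: fdiv_integrand_def min_def mult_le_0_iff)
qed

locale dp =
  fixes b :: real and \<mu> P Q :: "'a measure" and p q :: "'a \<Rightarrow> real"
  assumes b: "b > 1" and D: "dens_pair \<mu> P Q p q" and NA: "info_no_atoms b P p q"
begin

lemma pm[measurable]: "p \<in> borel_measurable \<mu>" and qm[measurable]: "q \<in> borel_measurable \<mu>"
  using D by (auto simp: dens_pair_def)
lemma pnn: "x \<in> space \<mu> \<Longrightarrow> 0 \<le> p x" and qnn: "x \<in> space \<mu> \<Longrightarrow> 0 \<le> q x"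
  using D by (auto simp: dens_pair_def)
lemma Pdef: "P = density \<mu> (\<lambda>x. ennreal (p x))" and Qdef: "Q = density \<mu> (\<lambda>x. ennreal (q x))"
  using D by (auto simp: dens_pair_def)
lemma probP: "prob_space P" and probQ: "prob_space Q"
  using D by (auto simp: dens_pair_def)

lemma dens_int:
  fixes f :: "'a \<Rightarrow> real"
  assumes fm: "f \<in> borel_measurable \<mu>" and fnn: "\<And>x. x \<in> space \<mu> \<Longrightarrow> 0 \<le> f x"
    and pr: "prob_space (density \<mu> (\<lambda>x. ennreal (f x)))"
  shows "integrable \<mu> f" "(\<integral>x. f x \<partial>\<mu>) = 1"
proof -
  have "emeasure (density \<mu> (\<lambda>x. ennreal (f x))) (space \<mu>) = 1"
    using prob_space.emeasure_space_1[OF pr] by simp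
  then have e: "(\<integral>\<^sup>+x. ennreal (f x) \<partial>\<mu>) = 1"
    using fm by (subst (asm) emeasure_density) (auto intro: nn_integral_cong)
  show i: "integrable \<mu> f"
    using e fm fnn by (intro integrableI_nonneg) auto
  have "(\<integral>x. f x \<partial>\<mu>) = enn2real (\<integral>\<^sup>+x. ennreal (f x) \<partial>\<mu>)"
    using fnn fm by (intro integral_eq_nn_integral) auto
  then show "(\<integral>x. f x \<partial>\<mu>) = 1" using e by simp
qed

lemma pint: "integrable \<mu> p" "(\<integral>x. p x \<partial>\<mu>) = 1"
  using dens_int[OF pm pnn] probP Pdef by auto
lemma qint: "integrable \<mu> q" "(\<integral>x. q x \<partial>\<mu>) = 1"
  using dens_int[OF qm qnn] probQ Qdef by auto

lemma minint: "integrable \<mu> (\<lambda>x. min (w * p x) ((1-w) * q x))"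
proof (rule Bochner_Integration.integrable_bound)
  show "integrable \<mu> (\<lambda>x. \<bar>w * p x\<bar> + \<bar>(1-w) * q x\<bar>)" using pint qint by auto
  show "AE x in \<mu>. norm (min (w * p x) ((1-w) * q x)) \<le> norm (\<bar>w * p x\<bar> + \<bar>(1-w) * q x\<bar>)"
    by (rule AE_I2) auto
qed auto

lemma info_eq: assumes "0 < w" "w < 1"
  shows "degroot_info w \<mu> p q = min w (1-w) - Gf \<mu> p q w"
proof -
  have "degroot_info w \<mu> p q = (\<integral>x. q x * min w (1-w) - min (w * p x) ((1-w) * q x) \<partial>\<mu>)"
    unfolding degroot_info_def f_divergence_def
    by (intro Bochner_Integration.integral_cong refl integrand_eq assms pnn qnn)
  also have "\<dots> = (\<integral>x. q x \<partial>\<mu>) * min w (1-w) - Gf \<mu> p q w"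
    unfolding Gf_def using qint minint by simp
  finally show ?thesis using qint by simp
qed

lemma Aset_sets[measurable]: "Aset \<mu> p q w \<in> sets \<mu>"
  unfolding Aset_def by measurable

lemma Rx_meas[measurable]: "Rx p q w \<in> borel_measurable \<mu>"
  unfolding Rx_def by measurable

lemma Rxint: "integrable \<mu> (Rx p q w)"
proof (rule Bochner_Integration.integrable_bound)
  show "integrable \<mu> (\<lambda>x. p x + q x)" using pint qint by auto
  show "AE x in \<mu>. norm (Rx p q w x) \<le> norm (p x + q x)"
    by (rule AE_I2) (use pnn qnn in \<open>auto simp: Rx_def\<close>)
qed auto

lemma PAint: "integrable \<mu> (\<lambda>x. indicator (Aset \<mu> p q w) x * p x)"
  using integrable_mult_indicator[OF Aset_sets pint(1)] by simp
lemma QCint: "integrable \<mu> (\<lambda>x. indicator (space \<mu> - Aset \<mu> p q w) x * q x)"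
  using integrable_mult_indicator[OF _ qint(1), of "space \<mu> - Aset \<mu> p q w"] by auto

lemma rho_eq: "rho \<mu> p q w = PA \<mu> p q w - QC \<mu> p q w"
proof -
  have "rho \<mu> p q w = (\<integral>x. indicator (Aset \<mu> p q w) x * p x - indicator (space \<mu> - Aset \<mu> p q w) x * q x \<partial>\<mu>)"
    unfolding rho_def by (intro Bochner_Integration.integral_cong refl) (auto simp: Rx_def Aset_def)
  then show ?thesis unfolding PA_def QC_def using PAint QCint by simp
qed

lemma G_eq: "Gf \<mu> p q w = w * PA \<mu> p q w + (1-w) * QC \<mu> p q w"
proof -
  have "Gf \<mu> p q w = (\<integral>x. w * (indicator (Aset \<mu> p q w) x * p x) + (1-w) * (indicator (space \<mu> - Aset \<mu> p q w) x * q x) \<partial>\<mu>)"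
    unfolding Gf_def by (intro Bochner_Integration.integral_cong refl) (auto simp: Aset_def min_def indicator_def)
  then show ?thesis unfolding PA_def QC_def using PAint QCint by simp
qed

lemma PA_bounds: "0 \<le> PA \<mu> p q w" "PA \<mu> p q w \<le> 1"
proof -
  show "0 \<le> PA \<mu> p q w" unfolding PA_def
    by (intro integral_nonneg_AE AE_I2) (auto simp: pnn)
  have "PA \<mu> p q w \<le> (\<integral>x. p x \<partial>\<mu>)" unfolding PA_def
    by (intro integral_mono_AE PAint pint AE_I2) (auto simp: pnn indicator_def)
  then show "PA \<mu> p q w \<le> 1" using pint by simp
qed

lemma QC_bounds: "0 \<le> QC \<mu> p q w" "QC \<mu> p q w \<le> 1"
proof -
  show "0 \<le> QC \<mu> p q w" unfolding QC_def
    by (intro integral_nonneg_AE AE_I2) (auto simp: qnn)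
  have "QC \<mu> p q w \<le> (\<integral>x. q x \<partial>\<mu>)" unfolding QC_def
    by (intro integral_mono_AE QCint qint AE_I2) (auto simp: qnn indicator_def)
  then show "QC \<mu> p q w \<le> 1" using qint by simp
qed

lemma G_super: "Gf \<mu> p q u - Gf \<mu> p q s \<le> (u - s) * rho \<mu> p q s"
proof -
  have "Gf \<mu> p q u \<le> (\<integral>x. min (s * p x) ((1-s) * q x) + (u - s) * Rx p q s x \<partial>\<mu>)"
    unfolding Gf_def
  proof (intro integral_mono_AE minint AE_I2)
    show "integrable \<mu> (\<lambda>x. min (s * p x) ((1-s) * q x) + (u - s) * Rx p q s x)"
      using minint Rxint by auto
    fix x
    show "min (u * p x) ((1 - u) * q x) \<le> min (s * p x) ((1 - s) * q x) + (u - s) * Rx p q s x"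
      by (auto simp: Rx_def min_def algebra_simps)
  qed
  also have "\<dots> = Gf \<mu> p q s + (u - s) * rho \<mu> p q s"
    unfolding Gf_def rho_def using minint Rxint by simp
  finally show ?thesis by simp
qed

lemma spaceP: "space P = space \<mu>" and setsP: "sets P = sets \<mu>"
  by (simp_all add: Pdef)

lemma dens_meas[measurable]: "info_dens b p q \<in> borel_measurable \<mu>"
  unfolding info_dens_def log_ext_def by measurable

lemma measP: assumes "A \<in> sets \<mu>" shows "measure P A = (\<integral>x. indicator A x * p x \<partial>\<mu>)"
proof -
  have "measure P A = integral\<^sup>L P (indicator A)"
    using assms sets.sets_into_space[OF assms] by (simp add: spaceP Int_absorb2)
  also have "\<dots> = (\<integral>x. p x *\<^sub>R indicator A x \<partial>\<mu>)"
    unfolding Pdef using assms pnn by (intro integral_density) auto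
  finally show ?thesis by (simp add: mult.commute)
qed

lemma dens_lt_iff: assumes "0 < w" "w < 1" "x \<in> space \<mu>" "0 < p x"
  shows "info_dens b p q x < ereal (log b ((1-w)/w)) \<longleftrightarrow> w * p x < (1-w) * q x"
proof (cases "q x > 0")
  case True
  have "info_dens b p q x = ereal (log b (p x / q x))"
    using True assms b by (simp add: info_dens_def log_ext_def log_divide)
  moreover have "log b (p x / q x) < log b ((1-w)/w) \<longleftrightarrow> p x / q x < (1-w)/w"
    using True assms b by (intro log_less_cancel_iff) auto
  moreover have "p x / q x < (1-w)/w \<longleftrightarrow> w * p x < (1-w) * q x"
    using True assms by (simp add: field_simps)
  ultimately show ?thesis by simp
next
  case False
  then have "q x = 0" using qnn[OF assms(3)] by simp
  moreover have "0 < w * p x" using assms by simp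
  ultimately show ?thesis by (simp add: info_dens_def log_ext_def)
qed

lemma cdf_eq: assumes "0 < w" "w < 1"
  shows "info_cdf b P p q (log b ((1-w)/w)) = PA \<mu> p q w"
proof -
  interpret P: prob_space P by (rule probP)
  define t where "t = log b ((1-w)/w)"
  define Slt where "Slt = {y \<in> space \<mu>. info_dens b p q y < ereal t}"
  define Seq where "Seq = {y \<in> space \<mu>. info_dens b p q y = ereal t}"
  have [measurable]: "Slt \<in> sets \<mu>" "Seq \<in> sets \<mu>" unfolding Slt_def Seq_def by measurable
  have "{y \<in> space P. info_dens b p q y \<le> ereal t} = Slt \<union> Seq"
    by (auto simp: Slt_def Seq_def spaceP)
  then have "info_cdf b P p q t = measure P (Slt \<union> Seq)" by (simp add: info_cdf_def)
  also have "\<dots> = measure P Slt + measure P Seq"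
    by (intro P.finite_measure_Union) (auto simp: setsP Slt_def Seq_def)
  also have "measure P Seq = 0" using NA by (simp add: info_no_atoms_def Seq_def spaceP)
  also have "measure P Slt = PA \<mu> p q w" unfolding measP[OF \<open>Slt \<in> sets \<mu>\<close>] PA_def
  proof (intro Bochner_Integration.integral_cong refl)
    fix x assume x: "x \<in> space \<mu>"
    show "indicator Slt x * p x = indicator (Aset \<mu> p q w) x * p x"
    proof (cases "p x > 0")
      case True then show ?thesis using dens_lt_iff[OF assms x True] x
        by (simp add: Slt_def Aset_def t_def indicator_def)
    next
      case False then have "p x = 0" using pnn[OF x] by simp
      then show ?thesis by simp
    qed
  qed
  finally show ?thesis by (simp add: t_def)
qed

lemma rho_cont: assumes "0 < s" "s < 1" shows "isCont (rho \<mu> p q) s"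
proof -
  define T where "T = {x \<in> space \<mu>. s * p x = (1-s) * q x \<and> 0 < p x}"
  have [measurable]: "T \<in> sets \<mu>" unfolding T_def by measurable
  have Tsub: "T \<subseteq> {y \<in> space P. info_dens b p q y = ereal (log b ((1-s)/s))}"
  proof
    fix x assume "x \<in> T"
    then have x: "x \<in> space \<mu>" "s * p x = (1-s) * q x" "0 < p x" by (auto simp: T_def)
    then have "q x > 0" using assms by (metis mult_pos_pos diff_gt_0_iff_gt mult_eq_0_iff order_less_le qnn)
    then have "p x / q x = (1-s)/s" using x assms by (simp add: field_simps)
    moreover have "log b (p x) - log b (q x) = log b (p x / q x)"
      using x \<open>q x > 0\<close> b by (simp add: log_divide)
    ultimately have "info_dens b p q x = ereal (log b ((1-s)/s))"
      using x \<open>q x > 0\<close> by (simp add: info_dens_def log_ext_def)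
    then show "x \<in> {y \<in> space P. info_dens b p q y = ereal (log b ((1-s)/s))}" using x by (simp add: spaceP)
  qed
  interpret P: prob_space P by (rule probP)
  have "measure P T \<le> measure P {y \<in> space P. info_dens b p q y = ereal (log b ((1-s)/s))}"
    using Tsub by (intro P.finite_measure_mono) (auto simp: setsP spaceP)
  then have "measure P T = 0" using NA measure_nonneg[of P T] unfolding info_no_atoms_def by (metis order_antisym)
  then have "(\<integral>x. indicator T x * p x \<partial>\<mu>) = 0" using measP by simp
  then have "AE x in \<mu>. indicator T x * p x = 0"
    using integrable_mult_indicator[OF _ pint(1), of T] pnn
    by (subst (asm) integral_nonneg_eq_0_iff_AE) auto
  then have AET: "AE x in \<mu>. x \<notin> T"
    by eventually_elim (auto simp: T_def)
  show ?thesis unfolding continuous_at_sequentially comp_def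
  proof (intro allI impI)
    fix X :: "nat \<Rightarrow> real" assume X: "X \<longlonglongrightarrow> s"
    show "(\<lambda>n. rho \<mu> p q (X n)) \<longlonglongrightarrow> rho \<mu> p q s" unfolding rho_def
    proof (rule integral_dominated_convergence[where w="\<lambda>x. p x + q x"])
      show "integrable \<mu> (\<lambda>x. p x + q x)" using pint qint by auto
      show "AE x in \<mu>. norm (Rx p q (X n) x) \<le> p x + q x" for n
        by (rule AE_I2) (use pnn qnn in \<open>auto simp: Rx_def\<close>)
      show "AE x in \<mu>. (\<lambda>n. Rx p q (X n) x) \<longlonglongrightarrow> Rx p q s x"
        using AET
      proof (rule AE_mp, intro AE_I2 impI)
        fix x assume x: "x \<in> space \<mu>" "x \<notin> T"
        have dl: "(\<lambda>n. X n * p x - (1 - X n) * q x) \<longlonglongrightarrow> s * p x - (1-s) * q x"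
          by (intro tendsto_intros X)
        consider "s * p x < (1-s) * q x" | "s * p x > (1-s) * q x" | "s * p x = (1-s) * q x" by linarith
        then show "(\<lambda>n. Rx p q (X n) x) \<longlonglongrightarrow> Rx p q s x"
        proof cases
          case 1
          then have "eventually (\<lambda>n. X n * p x - (1 - X n) * q x < 0) sequentially"
            by (intro order_tendstoD(2)[OF dl]) simp
          then have "eventually (\<lambda>n. Rx p q (X n) x = Rx p q s x) sequentially"
            by eventually_elim (use 1 in \<open>auto simp: Rx_def\<close>)
          then show ?thesis by (rule tendsto_eventually)
        next
          case 2
          then have "eventually (\<lambda>n. X n * p x - (1 - X n) * q x > 0) sequentially"
            by (intro order_tendstoD(1)[OF dl]) simp
          then have "eventually (\<lambda>n. Rx p q (X n) x = Rx p q s x) sequentially"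
            by eventually_elim (use 2 in \<open>auto simp: Rx_def\<close>)
          then show ?thesis by (rule tendsto_eventually)
        next
          case 3
          then have "p x = 0" using x pnn[OF x(1)] by (auto simp: T_def)
          then have "q x = 0" using 3 assms by simp
          then have "\<And>u. Rx p q u x = 0" using \<open>p x = 0\<close> by (simp add: Rx_def)
          then show ?thesis by simp
        qed
      qed
    qed auto
  qed
qed

lemma G_deriv: assumes "0 < s" "s < 1"
  shows "(Gf \<mu> p q has_field_derivative rho \<mu> p q s) (at s)"
  unfolding has_field_derivative_iff
proof (rule LIM_zero_cancel, rule Lim_null_comparison)
  have "isCont (rho \<mu> p q) s" by (rule rho_cont[OF assms])
  then have "((\<lambda>u. rho \<mu> p q u - rho \<mu> p q s) \<longlongrightarrow> 0) (at s)"
    by (simp add: LIM_zero isCont_def)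
  then show "((\<lambda>u. \<bar>rho \<mu> p q u - rho \<mu> p q s\<bar>) \<longlongrightarrow> 0) (at s)"
    by (simp add: tendsto_rabs_zero)
  show "\<forall>\<^sub>F u in at s. norm ((Gf \<mu> p q u - Gf \<mu> p q s) / (u - s) - rho \<mu> p q s) \<le> \<bar>rho \<mu> p q u - rho \<mu> p q s\<bar>"
  proof (rule eventually_at_filter[THEN iffD2, OF always_eventually], intro allI impI)
    fix u :: real assume "u \<noteq> s"
    have a: "Gf \<mu> p q u - Gf \<mu> p q s \<le> (u - s) * rho \<mu> p q s" by (rule G_super)
    have c: "Gf \<mu> p q s - Gf \<mu> p q u \<le> (s - u) * rho \<mu> p q u" by (rule G_super)
    show "norm ((Gf \<mu> p q u - Gf \<mu> p q s) / (u - s) - rho \<mu> p q s) \<le> \<bar>rho \<mu> p q u - rho \<mu> p q s\<bar>"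
    proof (cases "u > s")
      case True
      then have "(Gf \<mu> p q u - Gf \<mu> p q s) / (u - s) \<le> rho \<mu> p q s"
        "rho \<mu> p q u \<le> (Gf \<mu> p q u - Gf \<mu> p q s) / (u - s)"
        using a c by (simp_all add: field_simps)
      then show ?thesis by simp
    next
      case False
      then have "u < s" using \<open>u \<noteq> s\<close> by simp
      then have "(Gf \<mu> p q u - Gf \<mu> p q s) / (u - s) \<ge> rho \<mu> p q s"
        "rho \<mu> p q u \<ge> (Gf \<mu> p q u - Gf \<mu> p q s) / (u - s)"
        using a c by (simp_all add: field_simps)
      then show ?thesis by simp
    qed
  qed
qed

abbreviation "Ifun \<equiv> (\<lambda>w. degroot_info w \<mu> p q)"

lemma I_deriv_lo: assumes "0 < s" "s < 1/2"
  shows "(Ifun has_field_derivative 1 - rho \<mu> p q s) (at s)"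
proof (rule has_field_derivative_transform_within_open[where S="{0<..<1/2}"])
  show "((\<lambda>w. w - Gf \<mu> p q w) has_field_derivative 1 - rho \<mu> p q s) (at s)"
    using assms by (intro derivative_intros G_deriv) auto
  fix x :: real assume "x \<in> {0<..<1/2}"
  then show "x - Gf \<mu> p q x = degroot_info x \<mu> p q" by (subst info_eq) auto
qed (use assms in auto)

lemma I_deriv_hi: assumes "1/2 < s" "s < 1"
  shows "(Ifun has_field_derivative - 1 - rho \<mu> p q s) (at s)"
proof (rule has_field_derivative_transform_within_open[where S="{1/2<..<1}"])
  show "((\<lambda>w. (1 - w) - Gf \<mu> p q w) has_field_derivative - 1 - rho \<mu> p q s) (at s)"
  proof -
    have "(Gf \<mu> p q has_field_derivative rho \<mu> p q s) (at s)" by (rule G_deriv) (use assms in auto)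
    from DERIV_diff[OF DERIV_diff[OF DERIV_const DERIV_ident] this] show ?thesis by simp
  qed
  fix x :: real assume "x \<in> {1/2<..<1}"
  then show "(1 - x) - Gf \<mu> p q x = degroot_info x \<mu> p q" by (subst info_eq) auto
qed (use assms in auto)

lemma deriv_lo: "0 < s \<Longrightarrow> s < 1/2 \<Longrightarrow> deriv Ifun s = 1 - rho \<mu> p q s"
  by (rule DERIV_imp_deriv[OF I_deriv_lo])
lemma deriv_hi: "1/2 < s \<Longrightarrow> s < 1 \<Longrightarrow> deriv Ifun s = - 1 - rho \<mu> p q s"
  by (rule DERIV_imp_deriv[OF I_deriv_hi])

lemma rho_tends: "(rho \<mu> p q \<longlongrightarrow> rho \<mu> p q (1/2)) (at (1/2))"
  using rho_cont[of "1/2"] by (simp add: isCont_def)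

lemma lim_left: "(deriv Ifun \<longlongrightarrow> 1 - rho \<mu> p q (1/2)) (at_left (1/2))"
proof -
  have "((\<lambda>w. 1 - rho \<mu> p q w) \<longlongrightarrow> 1 - rho \<mu> p q (1/2)) (at_left (1/2))"
    using rho_tends filterlim_at_split by (intro tendsto_intros) blast
  moreover have "eventually (\<lambda>w. 1 - rho \<mu> p q w = deriv Ifun w) (at_left (1/2::real))"
  proof -
    have "eventually (\<lambda>w. w \<in> {0<..<1/2}) (at_left (1/2::real))" by (rule eventually_at_left_real) simp
    then show ?thesis by eventually_elim (simp add: deriv_lo)
  qed
  ultimately show ?thesis by (rule Lim_transform_eventually)
qed

lemma lim_right: "(deriv Ifun \<longlongrightarrow> - 1 - rho \<mu> p q (1/2)) (at_right (1/2))"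
proof -
  have "((\<lambda>w. - 1 - rho \<mu> p q w) \<longlongrightarrow> - 1 - rho \<mu> p q (1/2)) (at_right (1/2))"
    using rho_tends filterlim_at_split by (intro tendsto_intros) blast
  moreover have "eventually (\<lambda>w. - 1 - rho \<mu> p q w = deriv Ifun w) (at_right (1/2::real))"
  proof -
    have "eventually (\<lambda>w. w \<in> {1/2<..<1}) (at_right (1/2::real))" by (rule eventually_at_right_real) simp
    then show ?thesis by eventually_elim (simp add: deriv_hi)
  qed
  ultimately show ?thesis by (rule Lim_transform_eventually)
qed

lemma cdf_lo: "0 < s \<Longrightarrow> s < 1/2 \<Longrightarrow>
  info_cdf b P p q (log b ((1 - s) / s)) = 1 - Ifun s - (1 - s) * deriv Ifun s"
  by (simp add: cdf_eq deriv_lo info_eq rho_eq G_eq algebra_simps)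

lemma cdf_hi: "1/2 < s \<Longrightarrow> s < 1 \<Longrightarrow>
  info_cdf b P p q (log b ((1 - s) / s)) = - Ifun s - (1 - s) * deriv Ifun s"
  by (simp add: cdf_eq deriv_hi info_eq rho_eq G_eq algebra_simps)

lemma cdf0_left: "info_cdf b P p q 0 = 1 - Ifun (1/2) - 1/2 * Lim (at_left (1/2)) (deriv Ifun)"
proof -
  have "Lim (at_left (1/2)) (deriv Ifun) = 1 - rho \<mu> p q (1/2)"
    using lim_left by (intro tendsto_Lim) auto
  moreover have "info_cdf b P p q 0 = PA \<mu> p q (1/2)" using cdf_eq[of "1/2"] by simp
  ultimately show ?thesis by (simp add: info_eq rho_eq G_eq algebra_simps)
qed

lemma cdf0_right: "info_cdf b P p q 0 = - Ifun (1/2) - 1/2 * Lim (at_right (1/2)) (deriv Ifun)"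
proof -
  have "Lim (at_right (1/2)) (deriv Ifun) = - 1 - rho \<mu> p q (1/2)"
    using lim_right by (intro tendsto_Lim) auto
  moreover have "info_cdf b P p q 0 = PA \<mu> p q (1/2)" using cdf_eq[of "1/2"] by simp
  ultimately show ?thesis by (simp add: info_eq rho_eq G_eq algebra_simps)
qed

lemma cont_deriv: "continuous_on ({0<..<1/2} \<union> {1/2<..<1}) (deriv Ifun)"
proof (rule continuous_on_open_Un)
  have "continuous_on {0<..<1/2} (\<lambda>w. 1 - rho \<mu> p q w)"
    by (intro continuous_at_imp_continuous_on ballI continuous_intros rho_cont) auto
  then show "continuous_on {0<..<1/2} (deriv Ifun)"
    by (rule continuous_on_cong[THEN iffD1, rotated 2]) (auto simp: deriv_lo)
  have "continuous_on {1/2<..<1} (\<lambda>w. - 1 - rho \<mu> p q w)"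
    by (intro continuous_at_imp_continuous_on ballI continuous_intros rho_cont) auto
  then show "continuous_on {1/2<..<1} (deriv Ifun)"
    by (rule continuous_on_cong[THEN iffD1, rotated 2]) (auto simp: deriv_hi)
qed auto

end

lemma omega_choice: fixes b x :: real assumes "b > 1"
  defines "w \<equiv> 1 / (1 + b powr x)"
  shows "0 < w" "w < 1" "log b ((1 - w) / w) = x"
    "x > 0 \<Longrightarrow> w < 1/2" "x < 0 \<Longrightarrow> 1/2 < w"
proof -
  have bp: "b powr x > 0" using assms by simp
  show "0 < w" unfolding w_def using bp by (intro divide_pos_pos) linarith+
  have h: "1 < 1 + b powr x" using bp by linarith
  show "w < 1" unfolding w_def using h by (intro divide_less_eq_1_pos[THEN iffD2]) linarith+
  have nz: "1 + b powr x \<noteq> 0" using h by linarith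
  have "(1 - w) / w = b powr x" using nz by (simp add: w_def field_simps)
  then show "log b ((1 - w) / w) = x" using assms by simp
  show "x > 0 \<Longrightarrow> w < 1/2"
  proof -
    assume "x > 0" then have "b powr x > 1" using assms by (intro gr_one_powr)
    then show ?thesis unfolding w_def by (simp add: field_simps)
  qed
  show "x < 0 \<Longrightarrow> 1/2 < w"
  proof -
    assume "x < 0" then have "b powr x < 1" using assms by (intro powr_less_one)
    moreover have pos: "0 < 1 + b powr x" using bp by linarith
    ultimately show ?thesis unfolding w_def by (simp add: less_divide_eq)
  qed
qed

lemma deriv_eq_on: fixes f g :: "real \<Rightarrow> real"
  assumes "open S" "s \<in> S" "\<And>x. x \<in> S \<Longrightarrow> f x = g x"
  shows "deriv f s = deriv g s"
  by (rule deriv_cong_ev[OF _ refl]) (use assms in \<open>auto intro: eventually_nhds_in_open[THEN eventually_mono]\<close>)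

theorem theorem4:
  fixes b :: real and \<mu> P Q :: "'a measure" and p q :: "'a \<Rightarrow> real"
  assumes "b > 1"
    and "dens_pair \<mu> P Q p q"
    and "info_no_atoms b P p q"
  shows
   "(\<forall>\<omega> \<in> {0<..<1/2} \<union> {1/2<..<1}. (\<lambda>w. degroot_info w \<mu> p q) differentiable (at \<omega>))
    \<and> continuous_on ({0<..<1/2} \<union> {1/2<..<1}) (deriv (\<lambda>w. degroot_info w \<mu> p q))
    \<and> (\<forall>\<omega> \<in> {0<..<1/2}. deriv (\<lambda>w. degroot_info w \<mu> p q) \<omega> \<ge> 0)
    \<and> (\<forall>\<omega> \<in> {1/2<..<1}. deriv (\<lambda>w. degroot_info w \<mu> p q) \<omega> \<le> 0)
    \<and> (\<exists>L1 L2. (deriv (\<lambda>w. degroot_info w \<mu> p q) \<longlongrightarrow> L1) (at_left (1/2))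
             \<and> (deriv (\<lambda>w. degroot_info w \<mu> p q) \<longlongrightarrow> L2) (at_right (1/2))
             \<and> L1 - L2 = 2)
    \<and> (\<forall>\<omega> \<in> {0<..<1/2}. info_cdf b P p q (log b ((1 - \<omega>) / \<omega>))
          = 1 - degroot_info \<omega> \<mu> p q - (1 - \<omega>) * deriv (\<lambda>w. degroot_info w \<mu> p q) \<omega>)
    \<and> (\<forall>\<omega> \<in> {1/2<..<1}. info_cdf b P p q (log b ((1 - \<omega>) / \<omega>))
          = - degroot_info \<omega> \<mu> p q - (1 - \<omega>) * deriv (\<lambda>w. degroot_info w \<mu> p q) \<omega>)
    \<and> info_cdf b P p q 0 = - degroot_info (1/2) \<mu> p q
          - 1/2 * Lim (at_right (1/2)) (deriv (\<lambda>w. degroot_info w \<mu> p q))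
    \<and> (\<forall>(\<mu>' :: 'b measure) P' Q' p' q'.
          dens_pair \<mu>' P' Q' p' q' \<and> info_no_atoms b P' p' q'
          \<and> (\<forall>\<omega> \<in> {0<..1/2}. degroot_info \<omega> \<mu>' p' q' = degroot_info \<omega> \<mu> p q)
          \<longrightarrow> (\<forall>x \<ge> 0. info_cdf b P' p' q' x = info_cdf b P p q x))
    \<and> (\<forall>(\<mu>' :: 'b measure) P' Q' p' q'.
          dens_pair \<mu>' P' Q' p' q' \<and> info_no_atoms b P' p' q'
          \<and> (\<forall>\<omega> \<in> {1/2<..<1}. degroot_info \<omega> \<mu>' p' q' = degroot_info \<omega> \<mu> p q)
          \<longrightarrow> (\<forall>x < 0. info_cdf b P' p' q' x = info_cdf b P p q x))"
  proof -
  interpret dp b \<mu> P Q p q using assms by unfold_locales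
  have A1: "\<forall>\<omega> \<in> {0<..<1/2} \<union> {1/2<..<1}. (\<lambda>w. degroot_info w \<mu> p q) differentiable (at \<omega>)"
  proof
    fix \<omega> :: real assume "\<omega> \<in> {0<..<1/2} \<union> {1/2<..<1}"
    then have "\<exists>D. ((\<lambda>w. degroot_info w \<mu> p q) has_field_derivative D) (at \<omega>)"
      using I_deriv_lo I_deriv_hi by auto
    then show "(\<lambda>w. degroot_info w \<mu> p q) differentiable (at \<omega>)"
      unfolding differentiable_def using has_field_derivative_imp_has_derivative by blast
  qed
  have A3: "\<forall>\<omega> \<in> {0<..<1/2}. deriv (\<lambda>w. degroot_info w \<mu> p q) \<omega> \<ge> 0"
  proof
    fix w :: real assume "w \<in> {0<..<1/2}"
    then show "deriv (\<lambda>w. degroot_info w \<mu> p q) w \<ge> 0"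
      using deriv_lo[of w] rho_eq[of w] PA_bounds[of w] QC_bounds[of w] by auto
  qed
  have A4: "\<forall>\<omega> \<in> {1/2<..<1}. deriv (\<lambda>w. degroot_info w \<mu> p q) \<omega> \<le> 0"
  proof
    fix w :: real assume "w \<in> {1/2<..<1}"
    then show "deriv (\<lambda>w. degroot_info w \<mu> p q) w \<le> 0"
      using deriv_hi[of w] rho_eq[of w] PA_bounds[of w] QC_bounds[of w] by auto
  qed
  have A5: "\<exists>L1 L2. (deriv (\<lambda>w. degroot_info w \<mu> p q) \<longlongrightarrow> L1) (at_left (1/2))
             \<and> (deriv (\<lambda>w. degroot_info w \<mu> p q) \<longlongrightarrow> L2) (at_right (1/2))
             \<and> L1 - L2 = 2"
    using lim_left lim_right by (intro exI conjI) auto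
  have C1: "\<forall>(\<mu>' :: 'b measure) P' Q' p' q'.
          dens_pair \<mu>' P' Q' p' q' \<and> info_no_atoms b P' p' q'
          \<and> (\<forall>\<omega> \<in> {0<..1/2}. degroot_info \<omega> \<mu>' p' q' = degroot_info \<omega> \<mu> p q)
          \<longrightarrow> (\<forall>x \<ge> 0. info_cdf b P' p' q' x = info_cdf b P p q x)"
  proof (intro allI impI)
    fix \<mu>' :: "'b measure" and P' Q' p' q' and x :: real
    assume H: "dens_pair \<mu>' P' Q' p' q' \<and> info_no_atoms b P' p' q'
          \<and> (\<forall>\<omega> \<in> {0<..1/2}. degroot_info \<omega> \<mu>' p' q' = degroot_info \<omega> \<mu> p q)" and x: "0 \<le> x"
    interpret D2: dp b \<mu>' P' Q' p' q' using H assms by unfold_locales auto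
    have dq: "deriv (\<lambda>w. degroot_info w \<mu>' p' q') s = deriv (\<lambda>w. degroot_info w \<mu> p q) s"
      if "s \<in> {0<..<1/2}" for s
      by (rule deriv_eq_on[where S="{0<..<1/2}"]) (use H that in auto)
    show "info_cdf b P' p' q' x = info_cdf b P p q x"
    proof (cases "x = 0")
      case True
      have ev: "eventually (\<lambda>w. deriv (\<lambda>w. degroot_info w \<mu> p q) w = deriv (\<lambda>w. degroot_info w \<mu>' p' q') w) (at_left (1/2::real))"
      proof -
        have "eventually (\<lambda>w. w \<in> {0<..<1/2}) (at_left (1/2::real))" by (rule eventually_at_left_real) simp
        then show ?thesis by eventually_elim (simp add: dq)
      qed
      have "(deriv (\<lambda>w. degroot_info w \<mu>' p' q') \<longlongrightarrow> 1 - rho \<mu> p q (1/2)) (at_left (1/2))"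
        using lim_left ev by (rule Lim_transform_eventually)
      then have "Lim (at_left (1/2)) (deriv (\<lambda>w. degroot_info w \<mu>' p' q')) = Lim (at_left (1/2)) (deriv (\<lambda>w. degroot_info w \<mu> p q))"
        using lim_left by (simp add: tendsto_Lim)
      then show ?thesis using True D2.cdf0_left cdf0_left H by simp
    next
      case False
      then have "x > 0" using x by simp
      define w where "w = 1 / (1 + b powr x)"
      note oc = omega_choice[OF b, of x, folded w_def]
      have w: "0 < w" "w < 1/2" using oc \<open>x > 0\<close> by auto
      have "info_cdf b P' p' q' x = 1 - degroot_info w \<mu>' p' q' - (1 - w) * deriv (\<lambda>w. degroot_info w \<mu>' p' q') w"
        using D2.cdf_lo[OF w] oc by simp
      also have "\<dots> = 1 - degroot_info w \<mu> p q - (1 - w) * deriv (\<lambda>w. degroot_info w \<mu> p q) w"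
        using dq[of w] H w by auto
      also have "\<dots> = info_cdf b P p q x" using cdf_lo[OF w] oc by simp
      finally show ?thesis .
    qed
  qed
  have C2: "\<forall>(\<mu>' :: 'b measure) P' Q' p' q'.
          dens_pair \<mu>' P' Q' p' q' \<and> info_no_atoms b P' p' q'
          \<and> (\<forall>\<omega> \<in> {1/2<..<1}. degroot_info \<omega> \<mu>' p' q' = degroot_info \<omega> \<mu> p q)
          \<longrightarrow> (\<forall>x < 0. info_cdf b P' p' q' x = info_cdf b P p q x)"
  proof (intro allI impI)
    fix \<mu>' :: "'b measure" and P' Q' p' q' and x :: real
    assume H: "dens_pair \<mu>' P' Q' p' q' \<and> info_no_atoms b P' p' q'
          \<and> (\<forall>\<omega> \<in> {1/2<..<1}. degroot_info \<omega> \<mu>' p' q' = degroot_info \<omega> \<mu> p q)" and x: "x < 0"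
    interpret D2: dp b \<mu>' P' Q' p' q' using H assms by unfold_locales auto
    have dq: "deriv (\<lambda>w. degroot_info w \<mu>' p' q') s = deriv (\<lambda>w. degroot_info w \<mu> p q) s"
      if "s \<in> {1/2<..<1}" for s
      by (rule deriv_eq_on[where S="{1/2<..<1}"]) (use H that in auto)
    define w where "w = 1 / (1 + b powr x)"
    note oc = omega_choice[OF b, of x, folded w_def]
    have w: "1/2 < w" "w < 1" using oc x by auto
    have "info_cdf b P' p' q' x = - degroot_info w \<mu>' p' q' - (1 - w) * deriv (\<lambda>w. degroot_info w \<mu>' p' q') w"
      using D2.cdf_hi[OF w] oc by simp
    also have "\<dots> = - degroot_info w \<mu> p q - (1 - w) * deriv (\<lambda>w. degroot_info w \<mu> p q) w"
      using dq[of w] H w by auto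
    also have "\<dots> = info_cdf b P p q x" using cdf_hi[OF w] oc by simp
    finally show "info_cdf b P' p' q' x = info_cdf b P p q x" .
  qed
  show ?thesis
    using A1 cont_deriv A3 A4 A5 cdf_lo cdf_hi cdf0_right C1 C2 by auto
qed

end
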